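(* If $K\subseteq L\subseteq M$ are finite extensions inside $\bar K$, then $t_K(L)\mid t_K(M)$.
   Context: $K$ is a perfect field with a fixed algebraic closure $\bar K$. For a finite extension $P/K$, the ascending index $t_K(P)=[F:K]$, where $F$ is the unique subfield of $P$ that is Galois over $K$ of maximum possible degree. *)

theory Defs
  imports "HOL-Computational_Algebra.Primes" "HOL-Algebra.Algebraic_Closure" "HOL-Algebra.Finite_Extensions"
begin

text \<open>Conventions: the ambient structure R plays the role of the fixed algebraic
closure of K; all fields are subfields (carrier subsets) of R.\<close>

definition (in ring) perfect_subfield :: "'a set \<Rightarrow> bool" where
  "perfect_subfield K \<longleftrightarrow> subfield K R \<and>
     ((\<forall>n::nat. n > 0 \<longrightarrow> [n] \<cdot> \<one> \<noteq> \<zero>) \<or>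
      (\<exists>p::nat. Factorial_Ring.prime p \<and> [p] \<cdot> \<one> = \<zero> \<and> (\<forall>x\<in>K. \<exists>y\<in>K. y [^] p = x)))"

definition (in ring) galois_over :: "'a set \<Rightarrow> 'a set \<Rightarrow> bool" where
  "galois_over K F \<longleftrightarrow> subfield F R \<and> K \<subseteq> F \<and>
     (\<forall>x\<in>F. \<forall>y\<in>carrier R. eval (Irr K x) y = \<zero> \<longrightarrow> y \<in> F) \<and>
     (\<forall>x\<in>F. \<forall>y\<in>carrier R. alg_mult (Irr K x) y \<le> 1)"

text \<open>Ascending index t_K(P) = [F:K], F the maximal-degree subfield of P Galois
over K (unique, so the maximum of the degrees is its degree).\<close>
definition (in ring) ascending_index :: "'a set \<Rightarrow> 'a set \<Rightarrow> nat" where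
  "ascending_index K P = Max {dim K F | F. F \<subseteq> P \<and> galois_over K F}"

end

theory Submission
  imports Defs
begin

context field
begin

lemma subring_subalgebra:
  assumes "subring V R" "K \<subseteq> V" shows "subalgebra K V R"
  using assms unfolding subalgebra_def subalgebra_axioms_def
  by (auto simp: subringE subring_def)

lemma subalgebra_mono:
  assumes "subalgebra F V R" "K \<subseteq> F" shows "subalgebra K V R"
  using assms unfolding subalgebra_def subalgebra_axioms_def by auto

lemma dim_tower:
  assumes K: "subfield K R" and F: "subfield F R" and P: "subring P R"
    and KF: "K \<subseteq> F" and FP: "F \<subseteq> P" and fd: "finite_dimension K P"
  shows "finite_dimension K F" "finite_dimension F P" "dim K P = dim K F * dim F P"
proof -
  show fdF: "finite_dimension K F"
    using subalbegra_incl_imp_finite_dimension[OF K fd subring_subalgebra[OF subfieldE(1)[OF F] KF] FP] .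
  obtain Vs where Vs: "set Vs \<subseteq> carrier R" "Span K Vs = P"
    using exists_base[OF K finite_dimensionE[OF K fd]] by auto
  have "Span F Vs \<subseteq> P"
    using subalgebra_Span_incl[OF F subring_subalgebra[OF P FP]] Span_base_incl[OF K Vs(1)] Vs(2) by auto
  moreover have "P \<subseteq> Span F Vs"
    using subalgebra_Span_incl[OF K subalgebra_mono[OF Span_is_subalgebra[OF F Vs(1)] KF]
       Span_base_incl[OF F Vs(1)]] Vs(2) by auto
  ultimately have "Span F Vs = P" by auto
  then show fdP: "finite_dimension F P"
    using Span_finite_dimension[OF F Vs(1)] by simp
  show "dim K P = dim K F * dim F P"
    using telescopic_base_dim(2)[OF K F fdF fdP] unfolding over_def .
qed

lemma subfield_nonzero:
  assumes P: "subfield P R" shows "P \<noteq> {\<zero>}"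
proof
  assume "P = {\<zero>}"
  moreover have "\<one> \<in> P" using subringE(3)[OF subfieldE(1)[OF P]] .
  ultimately have "\<one> = \<zero>" by blast
  thus False using one_not_zero by blast
qed

lemma dim_pos:
  assumes K: "subfield K R" and P: "subfield P R" and fd: "finite_dimension K P"
  shows "dim K P > 0"
proof (rule ccontr)
  assume "\<not> dim K P > 0"
  hence "dim K P = 0" by blast
  moreover have "dimension (dim K P) K P" using finite_dimensionE[OF K fd] unfolding over_def .
  ultimately have "dimension 0 K P" by metis
  hence "P = {\<zero>}" using dimension_zero[OF K] by blast
  thus False using subfield_nonzero[OF P] by blast
qed

lemma dim_eq_imp_eq:
  assumes K: "subfield K R" and F: "subfield F R" and P: "subfield P R"
    and KF: "K \<subseteq> F" and FP: "F \<subseteq> P" and fd: "finite_dimension K P"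
    and eq: "dim K F = dim K P"
  shows "F = P"
proof -
  note t = dim_tower[OF K F subfieldE(1)[OF P] KF FP fd]
  have pos: "dim K P > 0" using dim_pos[OF K P fd] .
  have "dim K P = dim K P * dim F P" using t(3) unfolding eq .
  hence "dim F P = 1 \<or> dim K P = 0" by (rule mult_eq_self_implies_10)
  hence d: "dim F P = 1" using pos by linarith
  have d1: "dimension 1 F P" using finite_dimensionE[OF F t(2)] unfolding over_def d .
  obtain Vs where Vs: "set Vs \<subseteq> carrier R" "independent F Vs" "length Vs = 1" "Span F Vs = F"
    using exists_base[OF F dimension_one[OF F]] by blast
  have "set Vs \<subseteq> P" using Vs(4) Span_base_incl[OF F Vs(1)] FP by blast
  then have "Span F Vs = P"
    using independent_length_eq_dimension[OF F d1 Vs(2)] Vs(3) by blast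
  thus ?thesis using Vs(4) by simp
qed

end


context field
begin

lemma ext_simple:
  assumes E: "subfield E R" and sig: "hs \<in> ring_hom (R\<lparr>carrier := E\<rparr>) R"
    and a: "\<alpha> \<in> carrier R" "(algebraic over E) \<alpha>" and b: "\<beta> \<in> carrier R"
    and root: "eval (map hs (Irr E \<alpha>)) \<beta> = \<zero>"
  shows "\<exists>ht \<in> ring_hom (R\<lparr>carrier := simple_extension E \<alpha>\<rparr>) R. (\<forall>x\<in>E. ht x = hs x) \<and> ht \<alpha> = \<beta>"
proof -
  have Esr: "subring E R" using subfieldE(1)[OF E] .
  have Ec: "E \<subseteq> carrier R" using subringE(1)[OF Esr] .
  interpret S: ring_hom_ring "R\<lparr>carrier := E\<rparr>" R hs
    using ring_hom_ringI2[OF subring_is_ring[OF Esr] ring_axioms sig] .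
  interpret UP: domain "E[X]" using univ_poly_is_domain[OF Esr] .
  interpret EV: ring_hom_ring "E[X]" R "\<lambda>p. eval p \<alpha>" using eval_ring_hom[OF Esr a(1)] .
  define \<Phi> where "\<Phi> = (\<lambda>p. eval (map hs p) \<beta>)"
  have setp: "set p \<subseteq> E" if "p \<in> carrier (E[X])" for p
    using that polynomial_incl unfolding sym[OF univ_poly_carrier] by auto
  have setm: "set (map hs p) \<subseteq> carrier R" if "p \<in> carrier (E[X])" for p
    using setp[OF that] S.hom_closed by auto
  have Phi_hom: "\<Phi> \<in> ring_hom (E[X]) R"
  proof (rule ring_hom_memI)
    fix p assume "p \<in> carrier (E[X])" thus "\<Phi> p \<in> carrier R"
      unfolding \<Phi>_def using eval_in_carrier[OF setm b] by auto
  next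
    fix p q assume p: "p \<in> carrier (E[X])" and q: "q \<in> carrier (E[X])"
    have "\<Phi> (p \<otimes>\<^bsub>E[X]\<^esub> q) = eval (normalize (map hs (poly_mult p q))) \<beta>"
      unfolding \<Phi>_def univ_poly_mult
      using eval_normalize[OF setm[OF UP.m_closed[OF p q], unfolded univ_poly_mult] b] by simp
    also have "\<dots> = eval (poly_mult (map hs p) (map hs q)) \<beta>"
      using S.poly_mult_hom'[of p q] setp[OF p] setp[OF q] poly_mult_consistent[OF Esr] by simp
    also have "\<dots> = \<Phi> p \<otimes> \<Phi> q"
      unfolding \<Phi>_def using eval_poly_mult[OF setm[OF p] setm[OF q] b] .
    finally show "\<Phi> (p \<otimes>\<^bsub>E[X]\<^esub> q) = \<Phi> p \<otimes> \<Phi> q" .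
  next
    fix p q assume p: "p \<in> carrier (E[X])" and q: "q \<in> carrier (E[X])"
    have "\<Phi> (p \<oplus>\<^bsub>E[X]\<^esub> q) = eval (normalize (map hs (poly_add p q))) \<beta>"
      unfolding \<Phi>_def univ_poly_add
      using eval_normalize[OF setm[OF UP.a_closed[OF p q], unfolded univ_poly_add] b] by simp
    also have "\<dots> = eval (poly_add (map hs p) (map hs q)) \<beta>"
      using S.poly_add_hom'[of p q] setp[OF p] setp[OF q] poly_add_consistent[OF Esr] by simp
    also have "\<dots> = \<Phi> p \<oplus> \<Phi> q"
      unfolding \<Phi>_def using eval_poly_add[OF setm[OF p] setm[OF q] b] .
    finally show "\<Phi> (p \<oplus>\<^bsub>E[X]\<^esub> q) = \<Phi> p \<oplus> \<Phi> q" .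
  next
    show "\<Phi> \<one>\<^bsub>E[X]\<^esub> = \<one>"
      unfolding \<Phi>_def univ_poly_one using S.hom_one b by simp
  qed
  interpret PH: ring_hom_ring "E[X]" R \<Phi>
    using ring_hom_ringI2[OF UP.ring_axioms ring_axioms Phi_hom] .
  have Irr: "Irr E \<alpha> \<in> carrier (E[X])" using IrrE(1)[OF E a] .
  have ker: "\<Phi> p = \<zero>" if p: "p \<in> carrier (E[X])" "eval p \<alpha> = \<zero>" for p
  proof -
    have "Irr E \<alpha> divides\<^bsub>E[X]\<^esub> p"
      using Irr_minimal[OF E a p] pdivides_iff_shell[OF E Irr p(1)] by simp
    then obtain q where q: "q \<in> carrier (E[X])" "p = Irr E \<alpha> \<otimes>\<^bsub>E[X]\<^esub> q"
      unfolding factor_def by auto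
    have "\<Phi> p = \<Phi> (Irr E \<alpha>) \<otimes> \<Phi> q" using q PH.hom_mult Irr by simp
    also have "\<Phi> (Irr E \<alpha>) = \<zero>" using root unfolding \<Phi>_def .
    finally show ?thesis using PH.hom_closed[OF q(1)] by simp
  qed
  have wd: "\<Phi> p = \<Phi> q" if p: "p \<in> carrier (E[X])" and q: "q \<in> carrier (E[X])"
    and eq: "eval p \<alpha> = eval q \<alpha>" for p q
  proof -
    have d: "p \<ominus>\<^bsub>E[X]\<^esub> q \<in> carrier (E[X])" using p q by simp
    have "eval (p \<ominus>\<^bsub>E[X]\<^esub> q) \<alpha> = \<zero>"
      using EV.hom_a_inv p q eq EV.hom_add unfolding a_minus_def
      by (simp add: EV.hom_closed r_neg)
    hence "\<Phi> (p \<ominus>\<^bsub>E[X]\<^esub> q) = \<zero>" using ker d by simp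
    hence "\<Phi> p \<ominus> \<Phi> q = \<zero>" using PH.hom_a_inv p q PH.hom_add unfolding a_minus_def by simp
    thus ?thesis using PH.hom_closed p q by (simp add: r_right_minus_eq)
  qed
  have SE: "simple_extension E \<alpha> = (\<lambda>p. eval p \<alpha>) ` carrier (E[X])"
    using simple_extension_as_eval_img[OF Ec a(1)] .
  define ht where "ht = (\<lambda>z. \<Phi> (SOME p. p \<in> carrier (E[X]) \<and> eval p \<alpha> = z))"
  have tau: "ht (eval p \<alpha>) = \<Phi> p" if p: "p \<in> carrier (E[X])" for p
  proof -
    have "\<exists>q. q \<in> carrier (E[X]) \<and> eval q \<alpha> = eval p \<alpha>" using p by blast
    hence "(SOME q. q \<in> carrier (E[X]) \<and> eval q \<alpha> = eval p \<alpha>) \<in> carrier (E[X]) \<and>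
           eval (SOME q. q \<in> carrier (E[X]) \<and> eval q \<alpha> = eval p \<alpha>) \<alpha> = eval p \<alpha>"
      by (rule someI_ex)
    thus ?thesis unfolding ht_def using wd p by blast
  qed
  have tau_hom: "ht \<in> ring_hom (R\<lparr>carrier := simple_extension E \<alpha>\<rparr>) R"
  proof (rule ring_hom_memI)
    fix z assume "z \<in> carrier (R\<lparr>carrier := simple_extension E \<alpha>\<rparr>)"
    then obtain p where "p \<in> carrier (E[X])" "z = eval p \<alpha>" using SE by auto
    thus "ht z \<in> carrier R" using tau PH.hom_closed by simp
  next
    fix z w assume "z \<in> carrier (R\<lparr>carrier := simple_extension E \<alpha>\<rparr>)"
      "w \<in> carrier (R\<lparr>carrier := simple_extension E \<alpha>\<rparr>)"
    then obtain p q where p: "p \<in> carrier (E[X])" "z = eval p \<alpha>" and q: "q \<in> carrier (E[X])" "w = eval q \<alpha>"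
      using SE by auto
    have zw: "z \<otimes> w = eval (p \<otimes>\<^bsub>E[X]\<^esub> q) \<alpha>" using EV.hom_mult p q by simp
    have "ht (z \<otimes> w) = \<Phi> (p \<otimes>\<^bsub>E[X]\<^esub> q)"
      unfolding zw by (rule tau[OF UP.m_closed[OF p(1) q(1)]])
    thus "ht (z \<otimes>\<^bsub>R\<lparr>carrier := simple_extension E \<alpha>\<rparr>\<^esub> w) = ht z \<otimes> ht w"
      using tau p q PH.hom_mult by simp
  next
    fix z w assume "z \<in> carrier (R\<lparr>carrier := simple_extension E \<alpha>\<rparr>)"
      "w \<in> carrier (R\<lparr>carrier := simple_extension E \<alpha>\<rparr>)"
    then obtain p q where p: "p \<in> carrier (E[X])" "z = eval p \<alpha>" and q: "q \<in> carrier (E[X])" "w = eval q \<alpha>"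
      using SE by auto
    have zw: "z \<oplus> w = eval (p \<oplus>\<^bsub>E[X]\<^esub> q) \<alpha>" using EV.hom_add p q by simp
    have "ht (z \<oplus> w) = \<Phi> (p \<oplus>\<^bsub>E[X]\<^esub> q)"
      unfolding zw by (rule tau[OF UP.a_closed[OF p(1) q(1)]])
    thus "ht (z \<oplus>\<^bsub>R\<lparr>carrier := simple_extension E \<alpha>\<rparr>\<^esub> w) = ht z \<oplus> ht w"
      using tau p q PH.hom_add by simp
  next
    have o: "\<one> = eval \<one>\<^bsub>E[X]\<^esub> \<alpha>" using EV.hom_one by simp
    have "ht \<one> = \<Phi> \<one>\<^bsub>E[X]\<^esub>" by (subst o, rule tau[OF UP.one_closed])
    thus "ht \<one>\<^bsub>R\<lparr>carrier := simple_extension E \<alpha>\<rparr>\<^esub> = \<one>"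
      using PH.hom_one by simp
  qed
  have "ht x = hs x" if x: "x \<in> E" for x
  proof (cases "x = \<zero>")
    case True
    have o: "\<zero> = eval \<zero>\<^bsub>E[X]\<^esub> \<alpha>" using EV.hom_zero by simp
    have "ht \<zero> = \<Phi> \<zero>\<^bsub>E[X]\<^esub>" by (subst o, rule tau[OF UP.zero_closed])
    hence "ht \<zero> = \<zero>" using PH.hom_zero by simp
    moreover have "hs \<zero> = \<zero>" using S.hom_zero by simp
    ultimately show ?thesis using True by simp
  next
    case False
    have p: "[x] \<in> carrier (E[X])" using x False unfolding sym[OF univ_poly_carrier] polynomial_def by auto
    have "eval [x] \<alpha> = x" using x Ec a(1) by auto
    hence "ht x = \<Phi> [x]" using tau[OF p] by simp
    also have "\<dots> = hs x" unfolding \<Phi>_def using S.hom_closed x b by simp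
    finally show ?thesis .
  qed
  moreover have "ht \<alpha> = \<beta>"
  proof -
    have "ht \<alpha> = \<Phi> X" using tau[OF var_closed(1)[OF Esr]] eval_var[OF a(1)] by simp
    also have "\<dots> = \<beta>" unfolding \<Phi>_def var_def using S.hom_one S.hom_zero b by simp
    finally show ?thesis .
  qed
  ultimately show ?thesis using tau_hom by blast
qed

end


context field
begin

lemma hom_neg:
  assumes h: "h \<in> ring_hom (R\<lparr>carrier := D\<rparr>) R" and D: "subring D R" and a: "a \<in> D"
  shows "h (\<ominus> a) = \<ominus> h a"
proof -
  interpret H: ring_hom_ring "R\<lparr>carrier := D\<rparr>" R h
    using ring_hom_ringI2[OF subring_is_ring[OF D] ring_axioms h] .
  have na: "\<ominus> a \<in> D" using subringE(5)[OF D a] .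
  have ac: "a \<in> carrier R" using subringE(1)[OF D] a by auto
  have "h a \<oplus> h (\<ominus> a) = h (a \<oplus> \<ominus> a)" using H.hom_add[of a "\<ominus> a"] a na by simp
  also have "\<dots> = h \<zero>" using r_neg[OF ac] by simp
  also have "\<dots> = \<zero>" using H.hom_zero by simp
  finally have "h a \<oplus> h (\<ominus> a) = \<zero>" .
  moreover have "h a \<in> carrier R" "h (\<ominus> a) \<in> carrier R" using H.hom_closed a na by auto
  ultimately show ?thesis by (metis add.inv_closed add.m_comm minus_equality)
qed

lemma id_hom_sub:
  assumes "subring K R" shows "(\<lambda>x. x) \<in> ring_hom (R\<lparr>carrier := K\<rparr>) R"
  using subringE(1)[OF assms] by (intro ring_hom_memI) auto

lemma ext_list:
  assumes cl: "algebraic_closure R K" and E: "subfield E R" and KE: "K \<subseteq> E"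
    and hs: "hs \<in> ring_hom (R\<lparr>carrier := E\<rparr>) R" and ws: "set ws \<subseteq> carrier R"
  shows "\<exists>ht \<in> ring_hom (R\<lparr>carrier := finite_extension E ws\<rparr>) R. \<forall>x\<in>E. ht x = hs x"
  using ws
proof (induction ws)
  case Nil
  then show ?case using hs by auto
next
  case (Cons w ws)
  interpret AC: algebraic_closure R K using cl .
  have w: "w \<in> carrier R" and wsc: "set ws \<subseteq> carrier R" using Cons.prems by auto
  obtain t0 where t0: "t0 \<in> ring_hom (R\<lparr>carrier := finite_extension E ws\<rparr>) R" "\<forall>x\<in>E. t0 x = hs x"
    using Cons.IH[OF wsc] by blast
  let ?F = "finite_extension E ws"
  have algE: "(algebraic over E) z" if "z \<in> carrier R" for z
    using algebraic_mono[OF KE] AC.algebraic_extension[OF that] by (auto simp: over_def)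
  have F: "subfield ?F R" using finite_extension_is_subfield[OF E wsc] algE wsc by auto
  have EF: "E \<subseteq> ?F" using finite_extension_incl[OF subfieldE(3)[OF E] wsc] .
  have algF: "(algebraic over ?F) w"
    using algebraic_mono[OF EF] algE[OF w] by (auto simp: over_def)
  interpret T0: ring_hom_ring "R\<lparr>carrier := ?F\<rparr>" R t0
    using ring_hom_ringI2[OF subring_is_ring[OF subfieldE(1)[OF F]] ring_axioms t0(1)] .
  let ?p = "Irr ?F w"
  have Irr: "?p \<in> carrier (?F[X])" "lead_coeff ?p = \<one>" "eval ?p w = \<zero>"
    using IrrE[OF F w algF] by auto
  have setp: "set ?p \<subseteq> ?F" using Irr(1) polynomial_incl unfolding sym[OF univ_poly_carrier] by auto
  have pne: "?p \<noteq> []"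
    using pirreducibleE(1)[OF subfieldE(1)[OF F] Irr(1) IrrE(2)[OF F w algF]] .
  have "degree ?p \<noteq> 0"
  proof
    assume "degree ?p = 0"
    hence "?p = [\<one>]" using pne Irr(2) by (cases ?p) auto
    hence "eval ?p w = \<one>" by simp
    thus False using Irr(3) by simp
  qed
  let ?q = "map t0 ?p"
  have setq: "set ?q \<subseteq> carrier R" using setp T0.hom_closed by auto
  have leadq: "lead_coeff ?q = \<one>" using pne Irr(2) T0.hom_one by (cases ?p) auto
  have q: "?q \<in> carrier (poly_ring R)"
    using setq leadq pne unfolding sym[OF univ_poly_carrier] polynomial_def by (cases ?p) auto
  have "splitted ?q" using AC.roots_over_carrier[OF q] .
  hence "size (roots ?q) = degree ?q" unfolding splitted_def .
  hence "roots ?q \<noteq> {#}" using \<open>degree ?p \<noteq> 0\<close> by auto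
  then obtain b where "b \<in># roots ?q" by blast
  hence "is_root ?q b" using roots_mem_iff_is_root[OF q] by simp
  hence b: "b \<in> carrier R" "eval ?q b = \<zero>" unfolding is_root_def by auto
  obtain ht where ht: "ht \<in> ring_hom (R\<lparr>carrier := simple_extension ?F w\<rparr>) R" "\<forall>x\<in>?F. ht x = t0 x"
    using ext_simple[OF F t0(1) w algF b] by blast
  have "\<forall>x\<in>E. ht x = hs x" using ht(2) t0(2) EF by (metis subsetD)
  thus ?case using ht(1) by auto
qed

end


context field
begin

definition dpoly :: "'a list \<Rightarrow> 'a list"
  where "dpoly p = normalize (map (\<lambda>i. [Suc i] \<cdot> coeff p (Suc i)) (rev [0..<degree p]))"

lemma coeff_map_rev: "coeff (map f (rev [0..<n])) = (\<lambda>i. if i < n then f i else \<zero>)"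
proof (induction n)
  case 0 then show ?case by simp
next
  case (Suc n)
  have "map f (rev [0..<Suc n]) = f n # map f (rev [0..<n])" by simp
  then show ?case using Suc by (auto simp: fun_eq_iff)
qed

lemma add_pow_closed_sub:
  assumes "subring K R" "c \<in> K" shows "[(n::nat)] \<cdot> c \<in> K"
proof (induction n)
  case 0 then show ?case using subringE(2)[OF assms(1)] by simp
next
  case (Suc n) then show ?case
    using subringE(7)[OF assms(1)] assms(2) by (simp add: add.nat_pow_Suc)
qed

lemma coeff_dpoly:
  assumes "set p \<subseteq> carrier R"
  shows "coeff (dpoly p) i = [Suc i] \<cdot> coeff p (Suc i)"
proof -
  have "coeff (dpoly p) i = coeff (map (\<lambda>i. [Suc i] \<cdot> coeff p (Suc i)) (rev [0..<degree p])) i"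
    unfolding dpoly_def using normalize_coeff by metis
  also have "\<dots> = (if i < degree p then [Suc i] \<cdot> coeff p (Suc i) else \<zero>)"
    unfolding coeff_map_rev by simp
  also have "\<dots> = [Suc i] \<cdot> coeff p (Suc i)"
  proof (cases "i < degree p")
    case False
    hence "coeff p (Suc i) = \<zero>" using coeff_degree[of p "Suc i"] by simp
    thus ?thesis using False by simp
  qed simp
  finally show ?thesis .
qed

lemma dpoly_polynomial:
  assumes K: "subring K R" and p: "polynomial K p"
  shows "polynomial K (dpoly p)"
proof -
  have "set p \<subseteq> K" using polynomial_incl[OF p] .
  hence "coeff p i \<in> K" for i
  proof -
    assume sp: "set p \<subseteq> K"
    show "coeff p i \<in> K"
    proof (cases "i < length p")
      case True
      hence "coeff p i \<in> set p" using coeff_img_restrict[of p] by blast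
      thus ?thesis using sp by blast
    next
      case False thus ?thesis using coeff_length[of p i] subringE(2)[OF K] by simp
    qed
  qed
  hence "\<forall>i. [Suc i] \<cdot> coeff p (Suc i) \<in> K" using add_pow_closed_sub[OF K] by blast
  hence "set (map (\<lambda>i. [Suc i] \<cdot> coeff p (Suc i)) (rev [0..<degree p])) \<subseteq> K"
    unfolding set_map by blast
  thus ?thesis unfolding dpoly_def using normalize_gives_polynomial by blast
qed

lemma dpoly_length: "length (dpoly p) \<le> degree p"
  unfolding dpoly_def using normalize_length_le[of "map (\<lambda>i. [Suc i] \<cdot> coeff p (Suc i)) (rev [0..<degree p])"]
  by simp

lemma coeff_lin_mult:
  assumes a: "a \<in> carrier R" and q: "set q \<subseteq> carrier R"
  shows "coeff (poly_mult [\<one>, a] q) i = (if i = 0 then \<zero> else coeff q (i - 1)) \<oplus> a \<otimes> coeff q i"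
proof -
  have e: "poly_mult [\<one>, a] q = poly_add (map (\<lambda>b. \<one> \<otimes> b) q @ [\<zero>]) (poly_mult [a] q)"
    by simp
  have s1: "set (map (\<lambda>b. \<one> \<otimes> b) q @ [\<zero>]) \<subseteq> carrier R" using q by auto
  have s2: "set (poly_mult [a] q) \<subseteq> carrier R" using poly_mult_in_carrier[of "[a]" q] a q by auto
  have c1: "coeff (map (\<lambda>b. \<one> \<otimes> b) q @ [\<zero>]) i = (if i = 0 then \<zero> else coeff q (i - 1))"
    unfolding append_coeff scalar_coeff[OF one_closed] using coeff_in_carrier[OF q] by auto
  have c2: "coeff (poly_mult [a] q) i = a \<otimes> coeff q i"
    unfolding poly_mult_const'(1)[OF q a] using normalize_coeff scalar_coeff[OF a] by metis
  show ?thesis unfolding e poly_add_coeff[OF s1 s2] c1 c2 ..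
qed

lemma dpoly_in_carrier:
  assumes "set p \<subseteq> carrier R" shows "set (dpoly p) \<subseteq> carrier R"
proof -
  have "set (map (\<lambda>i. [Suc i] \<cdot> coeff p (Suc i)) (rev [0..<degree p])) \<subseteq> carrier R"
    using coeff_in_carrier[OF assms] by auto
  thus ?thesis unfolding dpoly_def using normalize_in_carrier by blast
qed

lemma dpoly_linear:
  assumes a: "a \<in> carrier R" and q: "set q \<subseteq> carrier R"
  shows "dpoly (poly_mult [\<one>, a] q) = poly_add q (poly_mult [\<one>, a] (dpoly q))"
proof -
  have sB: "set [\<one>, a] \<subseteq> carrier R" using a by auto
  have sBq: "set (poly_mult [\<one>, a] q) \<subseteq> carrier R" using poly_mult_in_carrier[OF sB q] .
  have sdq: "set (dpoly q) \<subseteq> carrier R" using dpoly_in_carrier[OF q] .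
  have sBdq: "set (poly_mult [\<one>, a] (dpoly q)) \<subseteq> carrier R" using poly_mult_in_carrier[OF sB sdq] .
  have p1: "polynomial (carrier R) (dpoly (poly_mult [\<one>, a] q))"
    unfolding dpoly_def by (rule normalize_gives_polynomial) (use sBq in auto)
  have p2: "polynomial (carrier R) (poly_add q (poly_mult [\<one>, a] (dpoly q)))"
    using poly_add_is_polynomial[OF carrier_is_subring q sBdq] .
  have "coeff (dpoly (poly_mult [\<one>, a] q)) i = coeff (poly_add q (poly_mult [\<one>, a] (dpoly q))) i" for i
  proof -
    have ci: "coeff q i \<in> carrier R" "coeff q (Suc i) \<in> carrier R" using coeff_in_carrier[OF q] by auto
    have "coeff (dpoly (poly_mult [\<one>, a] q)) i = [Suc i] \<cdot> (coeff q i \<oplus> a \<otimes> coeff q (Suc i))"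
      unfolding coeff_dpoly[OF sBq] coeff_lin_mult[OF a q] by simp
    also have "\<dots> = [Suc i] \<cdot> coeff q i \<oplus> [Suc i] \<cdot> (a \<otimes> coeff q (Suc i))"
      by (rule add.nat_pow_distrib) (use ci a in auto)
    also have "\<dots> = coeff q i \<oplus> ((if i = 0 then \<zero> else [i] \<cdot> coeff q i) \<oplus> a \<otimes> ([Suc i] \<cdot> coeff q (Suc i)))"
    proof -
      have "[Suc i] \<cdot> coeff q i = coeff q i \<oplus> (if i = 0 then \<zero> else [i] \<cdot> coeff q i)"
        using ci by (cases "i = 0") (auto simp: add.nat_pow_Suc add.m_comm)
      moreover have "[Suc i] \<cdot> (a \<otimes> coeff q (Suc i)) = a \<otimes> ([Suc i] \<cdot> coeff q (Suc i))"
        using add_pow_rdistr[OF a ci(2)] by (simp del: add.nat_pow_Suc)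
      ultimately show ?thesis using ci a by (simp add: add.m_assoc)
    qed
    also have "\<dots> = coeff (poly_add q (poly_mult [\<one>, a] (dpoly q))) i"
      unfolding poly_add_coeff[OF q sBdq] coeff_lin_mult[OF a sdq]
      using coeff_dpoly[OF q] by (cases i) auto
    finally show ?thesis .
  qed
  thus ?thesis using coeff_iff_polynomial_cond[OF p1 p2] by blast
qed

end


context cring
begin

lemma binomial_ring:
  assumes a: "a \<in> carrier R" and b: "b \<in> carrier R"
  shows "(a \<oplus> b) [^] (n::nat) = (\<Oplus>k\<in>{..n}. [(n choose k)] \<cdot> (a [^] k \<otimes> b [^] (n - k)))"
proof (induction n)
  case 0
  then show ?case using a b by simp
next
  case (Suc n)
  define f where "f = (\<lambda>k. a [^] k \<otimes> b [^] (n - k))"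
  have fc: "f k \<in> carrier R" for k unfolding f_def using a b by simp
  define S where "S = (\<Oplus>k\<in>{..n}. [(n choose k)] \<cdot> f k)"
  have Sc: "S \<in> carrier R" unfolding S_def using fc by (intro finsum_closed) auto
  have IH: "(a \<oplus> b) [^] n = S" using Suc.IH unfolding S_def f_def .
  have "(a \<oplus> b) [^] Suc n = S \<otimes> a \<oplus> S \<otimes> b" using IH a b Sc by (simp add: r_distr)
  also have "S \<otimes> a = (\<Oplus>k\<in>{..n}. [(n choose k)] \<cdot> (a [^] Suc k \<otimes> b [^] (Suc n - Suc k)))"
  proof -
    have "S \<otimes> a = (\<Oplus>k\<in>{..n}. ([(n choose k)] \<cdot> f k) \<otimes> a)"
      unfolding S_def using finsum_ldistr[of "{..n}" a "\<lambda>k. [(n choose k)] \<cdot> f k"] fc a by auto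
    also have "\<dots> = (\<Oplus>k\<in>{..n}. [(n choose k)] \<cdot> (a [^] Suc k \<otimes> b [^] (Suc n - Suc k)))"
    proof (rule finsum_cong')
      fix k assume "k \<in> {..n}"
      have "([(n choose k)] \<cdot> f k) \<otimes> a = [(n choose k)] \<cdot> (f k \<otimes> a)" using add_pow_ldistr[OF fc a] .
      also have "f k \<otimes> a = a [^] Suc k \<otimes> b [^] (Suc n - Suc k)"
        unfolding f_def using a b by (simp add: m_ac)
      finally show "([(n choose k)] \<cdot> f k) \<otimes> a = [(n choose k)] \<cdot> (a [^] Suc k \<otimes> b [^] (Suc n - Suc k))" .
    qed (use a b in auto)
    finally show ?thesis .
  qed
  also have "S \<otimes> b = (\<Oplus>k\<in>{..n}. [(n choose k)] \<cdot> (a [^] k \<otimes> b [^] (Suc n - k)))"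
  proof -
    have "S \<otimes> b = (\<Oplus>k\<in>{..n}. ([(n choose k)] \<cdot> f k) \<otimes> b)"
      unfolding S_def using finsum_ldistr[of "{..n}" b "\<lambda>k. [(n choose k)] \<cdot> f k"] fc b by auto
    also have "\<dots> = (\<Oplus>k\<in>{..n}. [(n choose k)] \<cdot> (a [^] k \<otimes> b [^] (Suc n - k)))"
    proof (rule finsum_cong')
      fix k assume k: "k \<in> {..n}"
      have "([(n choose k)] \<cdot> f k) \<otimes> b = [(n choose k)] \<cdot> (f k \<otimes> b)" using add_pow_ldistr[OF fc b] .
      also have "f k \<otimes> b = a [^] k \<otimes> b [^] (Suc n - k)"
      proof -
        have "Suc n - k = Suc (n - k)" using k by auto
        thus ?thesis unfolding f_def using a b by (simp add: m_ac)
      qed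
      finally show "([(n choose k)] \<cdot> f k) \<otimes> b = [(n choose k)] \<cdot> (a [^] k \<otimes> b [^] (Suc n - k))" .
    qed (use a b in auto)
    finally show ?thesis .
  qed
  also have "(\<Oplus>k\<in>{..n}. [(n choose k)] \<cdot> (a [^] Suc k \<otimes> b [^] (Suc n - Suc k))) \<oplus>
             (\<Oplus>k\<in>{..n}. [(n choose k)] \<cdot> (a [^] k \<otimes> b [^] (Suc n - k)))
           = (\<Oplus>k\<in>{..Suc n}. [(Suc n choose k)] \<cdot> (a [^] k \<otimes> b [^] (Suc n - k)))"
  proof -
    define g where "g = (\<lambda>k. a [^] k \<otimes> b [^] (Suc n - k))"
    have gc: "g k \<in> carrier R" for k unfolding g_def using a b by simp
    have A: "(\<Oplus>k\<in>{..Suc n}. (if k = 0 then \<zero> else [(n choose (k - 1))] \<cdot> g k))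
             = (\<Oplus>k\<in>{..n}. [(n choose k)] \<cdot> g (Suc k))"
      using finsum_Suc2[of "\<lambda>k. (if k = 0 then \<zero> else [(n choose (k - 1))] \<cdot> g k)" n] gc by simp
    have B: "(\<Oplus>k\<in>{..Suc n}. [(n choose k)] \<cdot> g k) = (\<Oplus>k\<in>{..n}. [(n choose k)] \<cdot> g k)"
      using finsum_Suc[of "\<lambda>k. [(n choose k)] \<cdot> g k" n] gc by (simp add: binomial_eq_0)
    have C: "(\<Oplus>k\<in>{..Suc n}. [(Suc n choose k)] \<cdot> g k)
        = (\<Oplus>k\<in>{..Suc n}. (if k = 0 then \<zero> else [(n choose (k - 1))] \<cdot> g k) \<oplus> [(n choose k)] \<cdot> g k)"
    proof (rule finsum_cong')
      fix k assume "k \<in> {..Suc n}"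
      show "[(Suc n choose k)] \<cdot> g k = (if k = 0 then \<zero> else [(n choose (k - 1))] \<cdot> g k) \<oplus> [(n choose k)] \<cdot> g k"
      proof (cases k)
        case 0 thus ?thesis using gc by simp
      next
        case (Suc j)
        have "[(Suc n choose k)] \<cdot> g k = [((n choose j) + (n choose Suc j))] \<cdot> g k" using Suc by simp
        also have "\<dots> = [(n choose j)] \<cdot> g k \<oplus> [(n choose Suc j)] \<cdot> g k"
          using add.nat_pow_mult[OF gc] by simp
        finally show ?thesis using Suc by simp
      qed
    qed (use gc in auto)
    also have "\<dots> = (\<Oplus>k\<in>{..Suc n}. (if k = 0 then \<zero> else [(n choose (k - 1))] \<cdot> g k)) \<oplus>
                    (\<Oplus>k\<in>{..Suc n}. [(n choose k)] \<cdot> g k)"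
      by (rule finsum_addf) (use gc in auto)
    finally have C: "(\<Oplus>k\<in>{..Suc n}. [(Suc n choose k)] \<cdot> g k) =
      (\<Oplus>k\<in>{..Suc n}. (if k = 0 then \<zero> else [(n choose (k - 1))] \<cdot> g k)) \<oplus>
      (\<Oplus>k\<in>{..Suc n}. [(n choose k)] \<cdot> g k)" .
    have "(\<Oplus>k\<in>{..n}. [(n choose k)] \<cdot> (a [^] Suc k \<otimes> b [^] (Suc n - Suc k))) \<oplus>
             (\<Oplus>k\<in>{..n}. [(n choose k)] \<cdot> (a [^] k \<otimes> b [^] (Suc n - k)))
        = (\<Oplus>k\<in>{..n}. [(n choose k)] \<cdot> g (Suc k)) \<oplus> (\<Oplus>k\<in>{..n}. [(n choose k)] \<cdot> g k)"
      unfolding g_def ..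
    also have "\<dots> = (\<Oplus>k\<in>{..Suc n}. [(Suc n choose k)] \<cdot> g k)"
      unfolding C A B ..
    finally show ?thesis unfolding g_def .
  qed
  finally show ?case .
qed

lemma add_pow_zero_char:
  assumes "[(p::nat)] \<cdot> \<one> = \<zero>" "c \<in> carrier R" shows "[p] \<cdot> c = \<zero>"
proof -
  have "[p] \<cdot> c = [p] \<cdot> (\<one> \<otimes> c)" using assms(2) by simp
  also have "\<dots> = ([p] \<cdot> \<one>) \<otimes> c" using add_pow_ldistr[OF one_closed assms(2)] by simp
  finally show ?thesis using assms by simp
qed

lemma freshman:
  assumes p: "Factorial_Ring.prime (p::nat)" and p0: "[p] \<cdot> \<one> = \<zero>"
    and a: "a \<in> carrier R" and b: "b \<in> carrier R"
  shows "(a \<oplus> b) [^] p = a [^] p \<oplus> b [^] p"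
proof -
  define g where "g = (\<lambda>k. [(p choose k)] \<cdot> (a [^] k \<otimes> b [^] (p - k)))"
  have gc: "g k \<in> carrier R" for k unfolding g_def using a b by simp
  have p1: "p \<ge> 1" using prime_gt_0_nat[OF p] by simp
  have mid: "g k = \<zero>" if "0 < k" "k < p" for k
  proof -
    have "p dvd (p choose k)" using dvd_choose_prime[OF that(2) _ _ p] that prime_gt_0_nat[OF p] by simp
    then obtain c where c: "p choose k = p * c" by blast
    have tc: "a [^] k \<otimes> b [^] (p - k) \<in> carrier R" using a b by simp
    have "g k = [(p * c)] \<cdot> (a [^] k \<otimes> b [^] (p - k))" unfolding g_def c ..
    also have "\<dots> = [c] \<cdot> ([p] \<cdot> (a [^] k \<otimes> b [^] (p - k)))"
      using add.nat_pow_pow[OF tc, of c p] by simp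
    finally have "g k = [c] \<cdot> ([p] \<cdot> (a [^] k \<otimes> b [^] (p - k)))" .
    also have "[p] \<cdot> (a [^] k \<otimes> b [^] (p - k)) = \<zero>" using add_pow_zero_char[OF p0] a b by simp
    finally show ?thesis by simp
  qed
  have "(a \<oplus> b) [^] p = (\<Oplus>k\<in>{..p}. g k)" unfolding g_def using binomial_ring[OF a b] .
  also have "\<dots> = (\<Oplus>k\<in>{0, p}. g k)"
    by (rule add.finprod_mono_neutral_cong_right) (use mid gc in auto)
  also have "\<dots> = g 0 \<oplus> g p" using p1 gc by (simp add: finsum_insert)
  also have "\<dots> = b [^] p \<oplus> a [^] p" unfolding g_def using a b by simp
  finally show ?thesis using a b by (simp add: add.m_comm)
qed

lemma freshman_finsum:
  assumes p: "Factorial_Ring.prime (p::nat)" and p0: "[p] \<cdot> \<one> = \<zero>"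
    and A: "finite A" and f: "f \<in> A \<rightarrow> carrier R"
  shows "(\<Oplus>i\<in>A. f i) [^] p = (\<Oplus>i\<in>A. f i [^] p)"
  using A f
proof (induction A rule: finite_induct)
  case empty
  then show ?case using prime_gt_0_nat[OF p] by (simp add: nat_pow_zero)
next
  case (insert x F)
  have fx: "f x \<in> carrier R" and fF: "f \<in> F \<rightarrow> carrier R" using insert.prems by auto
  have "(\<Oplus>i\<in>insert x F. f i) = f x \<oplus> (\<Oplus>i\<in>F. f i)" using finsum_insert[OF insert(1,2)] fx fF by simp
  hence "(\<Oplus>i\<in>insert x F. f i) [^] p = f x [^] p \<oplus> (\<Oplus>i\<in>F. f i) [^] p"
    using freshman[OF p p0 fx] finsum_closed[OF fF] by simp
  also have "\<dots> = f x [^] p \<oplus> (\<Oplus>i\<in>F. f i [^] p)" using insert.IH[OF fF] by simp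
  also have "\<dots> = (\<Oplus>i\<in>insert x F. f i [^] p)"
    using finsum_insert[OF insert(1,2), of "\<lambda>i. f i [^] p"] fx fF by (auto simp: Pi_def)
  finally show ?case .
qed

end


context field
begin

lemma eval_finsum:
  assumes p: "set p \<subseteq> carrier R" and x: "x \<in> carrier R"
  shows "eval p x = (\<Oplus>i\<in>{..<length p}. coeff p i \<otimes> x [^] i)"
  using p
proof (induction p)
  case Nil then show ?case by simp
next
  case (Cons c p)
  have c: "c \<in> carrier R" and sp: "set p \<subseteq> carrier R" using Cons.prems by auto
  have "eval (c # p) x = c \<otimes> x [^] length p \<oplus> eval p x" by simp
  also have "eval p x = (\<Oplus>i\<in>{..<length p}. coeff (c # p) i \<otimes> x [^] i)"
    unfolding Cons.IH[OF sp] by (rule finsum_cong') (use coeff_in_carrier[OF sp] x in auto)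
  also have "c \<otimes> x [^] length p \<oplus> (\<Oplus>i\<in>{..<length p}. coeff (c # p) i \<otimes> x [^] i)
           = (\<Oplus>i\<in>insert (length p) {..<length p}. coeff (c # p) i \<otimes> x [^] i)"
    using finsum_insert[of "{..<length p}" "length p" "\<lambda>i. coeff (c # p) i \<otimes> x [^] i"]
      coeff_in_carrier[of "c # p"] c sp x by auto
  also have "insert (length p) {..<length p} = {..<length (c # p)}" by auto
  finally show ?case .
qed

lemma eval_finsum_ge:
  assumes p: "set p \<subseteq> carrier R" and x: "x \<in> carrier R" and N: "length p \<le> N"
  shows "eval p x = (\<Oplus>i\<in>{..<N}. coeff p i \<otimes> x [^] i)"
  unfolding eval_finsum[OF p x]
  by (rule add.finprod_mono_neutral_cong_left)
     (use N coeff_length[of p] coeff_in_carrier[OF p] x in auto)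

lemma char_not_dvd:
  assumes p: "Factorial_Ring.prime (p::nat)" and p0: "[p] \<cdot> \<one> = \<zero>" and nd: "\<not> p dvd i"
  shows "[i] \<cdot> \<one> \<noteq> \<zero>"
proof
  assume i0: "[i] \<cdot> \<one> = \<zero>"
  have "i \<noteq> 0"
  proof
    assume "i = 0" hence "p dvd i" by simp
    thus False using nd by simp
  qed
  have "coprime i p" using prime_imp_coprime[OF p nd] by (simp add: coprime_commute)
  hence g1: "gcd i p = 1" by simp
  obtain a b where ab0: "i * a = p * b + gcd i p" using bezout_nat[OF \<open>i \<noteq> 0\<close>, of p] by blast
  hence ab: "a * i = b * p + gcd i p" by (simp add: mult.commute)
  have "[(a * i)] \<cdot> \<one> = [a] \<cdot> ([i] \<cdot> \<one>)" using add.nat_pow_pow[OF one_closed, of a i] by (simp add: mult.commute)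
  also have "\<dots> = \<zero>" using i0 by simp
  finally have A: "[(a * i)] \<cdot> \<one> = \<zero>" .
  have "[(b * p + 1)] \<cdot> \<one> = [(b * p)] \<cdot> \<one> \<oplus> [(1::nat)] \<cdot> \<one>"
    using add.nat_pow_mult[OF one_closed, of "b * p" 1] by simp
  also have "[(b * p)] \<cdot> \<one> = [b] \<cdot> ([p] \<cdot> \<one>)" using add.nat_pow_pow[OF one_closed, of b p] by (simp add: mult.commute)
  also have "\<dots> = \<zero>" using p0 by simp
  finally have B: "[(b * p + 1)] \<cdot> \<one> = \<one>" by simp
  have "a * i = b * p + 1" using ab g1 by simp
  hence "\<one> = \<zero>" using A B by simp
  thus False by simp
qed

lemma pow_eq_zero_imp:
  assumes a: "a \<in> carrier R" and e: "a [^] (n::nat) = \<zero>" shows "a = \<zero>"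
  using e
proof (induction n)
  case 0 then show ?case by simp
next
  case (Suc n)
  hence "a [^] n \<otimes> a = \<zero>" by simp
  hence "a [^] n = \<zero> \<or> a = \<zero>" using integral_iff[of "a [^] n" a] a by simp
  thus ?case using Suc.IH by blast
qed

lemma coeff_in_sub:
  assumes "set p \<subseteq> K" "\<zero> \<in> K" shows "coeff p i \<in> K"
proof (cases "i < length p")
  case True
  hence "coeff p i \<in> set p" using coeff_img_restrict[of p] by blast
  thus ?thesis using assms by blast
next
  case False thus ?thesis using coeff_length[of p i] assms by simp
qed

lemma charp_contra:
  assumes K: "subfield K R" and p: "Factorial_Ring.prime (p::nat)" and p0: "[p] \<cdot> \<one> = \<zero>"
    and fr: "\<forall>x\<in>K. \<exists>y\<in>K. y [^] p = x"
    and x: "x \<in> carrier R" and alg: "(algebraic over K) x"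
    and d0: "\<And>i. [Suc i] \<cdot> coeff (Irr K x) (Suc i) = \<zero>"
  shows False
proof -
  let ?g = "Irr K x"
  have Ks: "subring K R" using subfieldE(1)[OF K] .
  have Kc: "K \<subseteq> carrier R" using subfieldE(3)[OF K] .
  have K0: "\<zero> \<in> K" using subringE(2)[OF Ks] .
  have I: "?g \<in> carrier (K[X])" "pirreducible K ?g" "lead_coeff ?g = \<one>" "eval ?g x = \<zero>"
    using IrrE[OF K x alg] by auto
  have gne: "?g \<noteq> []" using pirreducibleE(1)[OF Ks I(1,2)] .
  have sgK: "set ?g \<subseteq> K" using I(1) polynomial_incl unfolding sym[OF univ_poly_carrier] by auto
  have sg: "set ?g \<subseteq> carrier R" using sgK Kc by auto
  have cK: "coeff ?g i \<in> K" for i using coeff_in_sub[OF sgK K0] .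
  have cc: "coeff ?g i \<in> carrier R" for i using coeff_in_carrier[OF sg] .
  have p2: "p \<ge> 2" using prime_ge_2_nat[OF p] .
  have cz: "coeff ?g i = \<zero>" if nd: "\<not> p dvd i" for i
  proof -
    obtain j where j: "i = Suc j" using nd by (cases i) auto
    have "([i] \<cdot> \<one>) \<otimes> coeff ?g i = [i] \<cdot> (\<one> \<otimes> coeff ?g i)" using add_pow_ldistr[OF one_closed cc] .
    also have "\<dots> = \<zero>" using d0[of j] j cc by simp
    finally have "([i] \<cdot> \<one>) \<otimes> coeff ?g i = \<zero>" .
    moreover have "[i] \<cdot> \<one> \<noteq> \<zero>" using char_not_dvd[OF p p0 nd] .
    ultimately show ?thesis using integral_iff[of "[i] \<cdot> \<one>" "coeff ?g i"] cc by simp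
  qed
  define n where "n = degree ?g"
  have deg: "n \<noteq> 0"
  proof
    assume "n = 0"
    hence "?g = [\<one>]" using gne I(3) unfolding n_def by (cases ?g) auto
    hence "eval ?g x = \<one>" by simp
    thus False using I(4) by simp
  qed
  have cn: "coeff ?g n = \<one>" unfolding n_def using lead_coeff_simp[OF gne] I(3) by simp
  have pn: "p dvd n" using cz[of n] cn by auto
  define m where "m = n div p"
  have nm: "n = p * m" unfolding m_def using pn by simp
  have m1: "m \<ge> 1" using deg nm by (cases m) auto
  have "2 * m \<le> p * m" using p2 by (rule mult_right_mono) simp
  hence mn: "m < n" using nm m1 by linarith
  define d where "d = (\<lambda>j. SOME y. y \<in> K \<and> y [^] p = coeff ?g (p * j))"
  have dprop: "d j \<in> K \<and> d j [^] p = coeff ?g (p * j)" for j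
  proof -
    have "\<exists>y. y \<in> K \<and> y [^] p = coeff ?g (p * j)" using fr cK by blast
    thus ?thesis unfolding d_def by (rule someI_ex)
  qed
  have dK: "d j \<in> K" for j using dprop by blast
  have dc: "d j \<in> carrier R" for j using dK Kc by blast
  define l where "l = map d (rev [0..<Suc m])"
  define h where "h = normalize l"
  have slK: "set l \<subseteq> K" unfolding l_def using dK by auto
  have hK: "polynomial K h" unfolding h_def using normalize_gives_polynomial[OF slK] .
  have hK': "h \<in> carrier (K[X])" using hK univ_poly_carrier by blast
  have sh: "set h \<subseteq> carrier R" using polynomial_incl[OF hK] Kc by auto
  have ch: "coeff h j = (if j < Suc m then d j else \<zero>)" for j
    unfolding h_def l_def using normalize_coeff[of "map d (rev [0..<Suc m])"] coeff_map_rev by metis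
  have lh: "length h \<le> Suc m" unfolding h_def l_def using normalize_length_le[of "map d (rev [0..<Suc m])"] by simp
  have dm: "d m \<noteq> \<zero>"
  proof
    assume "d m = \<zero>"
    hence "coeff ?g (p * m) = \<zero>" using dprop[of m] prime_gt_0_nat[OF p] by (simp add: nat_pow_zero)
    thus False using cn nm by simp
  qed
  have hne: "h \<noteq> []" using ch[of m] dm by auto
  have eh: "eval h x = (\<Oplus>j\<in>{..<Suc m}. d j \<otimes> x [^] j)"
    unfolding eval_finsum_ge[OF sh x lh] by (rule finsum_cong') (use ch dc x in auto)
  have "(eval h x) [^] p = (\<Oplus>j\<in>{..<Suc m}. (d j \<otimes> x [^] j) [^] p)"
    unfolding eh by (rule freshman_finsum[OF p p0]) (use dc x in auto)
  also have "\<dots> = (\<Oplus>j\<in>{..<Suc m}. coeff ?g (p * j) \<otimes> x [^] (p * j))"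
  proof (rule finsum_cong')
    fix j assume "j \<in> {..<Suc m}"
    have "(d j \<otimes> x [^] j) [^] p = d j [^] p \<otimes> (x [^] j) [^] p" using nat_pow_distrib dc x by simp
    also have "\<dots> = coeff ?g (p * j) \<otimes> x [^] (p * j)"
      using dprop[of j] nat_pow_pow[OF x, of j p] by (simp add: mult.commute)
    finally show "(d j \<otimes> x [^] j) [^] p = coeff ?g (p * j) \<otimes> x [^] (p * j)" .
  qed (use cc x in auto)
  also have "\<dots> = (\<Oplus>i\<in>(\<lambda>j. p * j) ` {..<Suc m}. coeff ?g i \<otimes> x [^] i)"
  proof (rule sym, rule finsum_reindex)
    show "(\<lambda>i. coeff ?g i \<otimes> x [^] i) \<in> (\<lambda>j. p * j) ` {..<Suc m} \<rightarrow> carrier R" using cc x by auto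
    show "inj_on (\<lambda>j. p * j) {..<Suc m}" using p2 by (auto simp: inj_on_def)
  qed
  also have "\<dots> = (\<Oplus>i\<in>{..<length ?g}. coeff ?g i \<otimes> x [^] i)"
  proof (rule add.finprod_mono_neutral_cong_left)
    show "finite {..<length ?g}" by simp
    show "(\<lambda>j. p * j) ` {..<Suc m} \<subseteq> {..<length ?g}"
    proof
      fix i assume "i \<in> (\<lambda>j. p * j) ` {..<Suc m}"
      then obtain j where "j < Suc m" "i = p * j" by auto
      hence "i \<le> p * m" by simp
      thus "i \<in> {..<length ?g}" using nm n_def gne by (cases ?g) auto
    qed
    show "(\<lambda>i. coeff ?g i \<otimes> x [^] i) \<in> {..<length ?g} \<rightarrow> carrier R" using cc x by auto
    fix i assume i: "i \<in> {..<length ?g} - (\<lambda>j. p * j) ` {..<Suc m}"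
    have "\<not> p dvd i"
    proof
      assume "p dvd i"
      then obtain j where j: "i = p * j" by blast
      have "i \<le> n" using i n_def by auto
      hence "j \<le> m" using j nm p2 by simp
      thus False using i j by auto
    qed
    thus "coeff ?g i \<otimes> x [^] i = \<zero>" using cz x by simp
  qed simp
  also have "\<dots> = eval ?g x" using eval_finsum[OF sg x] by simp
  also have "\<dots> = \<zero>" using I(4) .
  finally have "eval h x = \<zero>" using pow_eq_zero_imp eval_in_carrier[OF sh x] by blast
  hence "?g pdivides h" using Irr_minimal[OF K x alg hK'] by simp
  hence "degree ?g \<le> degree h" using pdivides_imp_degree_le[OF Ks I(1) hK' hne] by simp
  thus False using lh mn n_def by simp
qed

end


context field
begin

lemma dpoly_double_root:
  assumes y: "y \<in> carrier R" and g: "g \<in> carrier (poly_ring R)"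
    and dv: "([\<one>, \<ominus> y] [^]\<^bsub>poly_ring R\<^esub> (2::nat)) pdivides g"
  shows "eval (dpoly g) y = \<zero>"
proof -
  interpret UP: domain "poly_ring R" using univ_poly_is_domain[OF carrier_is_subring] .
  let ?B = "[\<one>, \<ominus> y]"
  have B: "?B \<in> carrier (poly_ring R)" using y unfolding sym[OF univ_poly_carrier] polynomial_def by auto
  have sB: "set ?B \<subseteq> carrier R" using y by auto
  obtain r where r: "r \<in> carrier (poly_ring R)" "g = (?B [^]\<^bsub>poly_ring R\<^esub> (2::nat)) \<otimes>\<^bsub>poly_ring R\<^esub> r"
    using dv unfolding pdivides_def factor_def by auto
  have "?B [^]\<^bsub>poly_ring R\<^esub> (2::nat) = ?B \<otimes>\<^bsub>poly_ring R\<^esub> ?B"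
    using B by (simp add: numeral_2_eq_2)
  hence g2: "g = ?B \<otimes>\<^bsub>poly_ring R\<^esub> (?B \<otimes>\<^bsub>poly_ring R\<^esub> r)" using r B UP.m_assoc by simp
  define q where "q = ?B \<otimes>\<^bsub>poly_ring R\<^esub> r"
  have q: "q \<in> carrier (poly_ring R)" unfolding q_def using B r by simp
  have sq: "set q \<subseteq> carrier R" using q polynomial_incl unfolding sym[OF univ_poly_carrier] by auto
  have sr: "set r \<subseteq> carrier R" using r polynomial_incl unfolding sym[OF univ_poly_carrier] by auto
  have gq: "g = poly_mult ?B q" using g2 unfolding q_def univ_poly_mult by simp
  have eB: "eval ?B y = \<zero>" using y by (simp, algebra)
  have eq: "eval q y = \<zero>" unfolding q_def univ_poly_mult
    using eval_poly_mult[OF sB sr y] eB eval_in_carrier[OF sr y] by simp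
  have sdq: "set (dpoly q) \<subseteq> carrier R" using dpoly_in_carrier[OF sq] .
  have sBdq: "set (poly_mult ?B (dpoly q)) \<subseteq> carrier R" using poly_mult_in_carrier[OF sB sdq] .
  have "eval (dpoly g) y = eval q y \<oplus> eval (poly_mult ?B (dpoly q)) y"
    unfolding gq dpoly_linear[OF add.inv_closed[OF y] sq] using eval_poly_add[OF sq sBdq y] .
  also have "\<dots> = \<zero>"
    using eq eval_poly_mult[OF sB sdq y] eB eval_in_carrier[OF sdq y] by simp
  finally show ?thesis .
qed


lemma sep_lemma:
  assumes K: "subfield K R" and perf: "perfect_subfield K" and x: "x \<in> carrier R"
    and alg: "(algebraic over K) x"
  shows "alg_mult (Irr K x) y \<le> 1"
proof (rule ccontr)
  assume "\<not> alg_mult (Irr K x) y \<le> 1"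
  hence m2: "alg_mult (Irr K x) y \<ge> 2" by simp
  let ?g = "Irr K x"
  have Ks: "subring K R" using subfieldE(1)[OF K] .
  have Kc: "K \<subseteq> carrier R" using subfieldE(3)[OF K] .
  have I: "?g \<in> carrier (K[X])" "pirreducible K ?g" "lead_coeff ?g = \<one>" "eval ?g x = \<zero>"
    using IrrE[OF K x alg] by auto
  have gne: "?g \<noteq> []" using pirreducibleE(1)[OF Ks I(1,2)] .
  have y: "y \<in> carrier R" using m2 unfolding alg_mult_def by (auto split: if_splits)
  have pK: "polynomial K ?g" using I(1) univ_poly_carrier by blast
  have gR: "?g \<in> carrier (poly_ring R)"
    using carrier_polynomial[OF Ks pK] univ_poly_carrier by blast
  have dv: "([\<one>, \<ominus> y] [^]\<^bsub>poly_ring R\<^esub> (2::nat)) pdivides ?g"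
    using le_alg_mult_imp_pdivides[OF y gR m2] .
  have ed: "eval (dpoly ?g) y = \<zero>" using dpoly_double_root[OF y gR dv] .
  have "alg_mult ?g y > 0" using m2 by simp
  hence "is_root ?g y" using alg_mult_gt_zero_iff_is_root[OF gR] by simp
  hence ey: "eval ?g y = \<zero>" unfolding is_root_def by simp
  have algy: "(algebraic over K) y" using algebraicI[OF I(1) gne ey] .
  have Iy: "Irr K y = ?g"
    using minimal_polynomial_is_unique[OF K y algy] IrrE[OF K y algy] I ey by metis
  have dK: "dpoly ?g \<in> carrier (K[X])"
    using dpoly_polynomial[OF Ks pK] univ_poly_carrier by blast
  have deg: "degree ?g \<noteq> 0"
  proof
    assume "degree ?g = 0"
    hence "?g = [\<one>]" using gne I(3) by (cases ?g) auto
    hence "eval ?g x = \<one>" by simp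
    thus False using I(4) by simp
  qed
  have dz: "dpoly ?g = []"
  proof (rule ccontr)
    assume ne: "dpoly ?g \<noteq> []"
    have "?g pdivides dpoly ?g" using Irr_minimal[OF K y algy dK ed] Iy by simp
    hence "degree ?g \<le> degree (dpoly ?g)" using pdivides_imp_degree_le[OF Ks I(1) dK ne] by simp
    moreover have "length (dpoly ?g) \<le> degree ?g" using dpoly_length .
    ultimately show False using deg ne by (cases "dpoly ?g") auto
  qed
  have sg: "set ?g \<subseteq> carrier R" using gR polynomial_incl unfolding sym[OF univ_poly_carrier] by auto
  have d0: "[Suc i] \<cdot> coeff ?g (Suc i) = \<zero>" for i
    using coeff_dpoly[OF sg, of i] dz by simp
  from perf consider "\<forall>n::nat. n > 0 \<longrightarrow> [n] \<cdot> \<one> \<noteq> \<zero>"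
    | "\<exists>p::nat. Factorial_Ring.prime p \<and> [p] \<cdot> \<one> = \<zero> \<and> (\<forall>x\<in>K. \<exists>y\<in>K. y [^] p = x)"
    unfolding perfect_subfield_def by blast
  then show False
  proof cases
    case 1
    have e: "Suc (degree ?g - 1) = degree ?g" using deg by simp
    have "coeff ?g (Suc (degree ?g - 1)) = \<one>" unfolding e using I(3) lead_coeff_simp[OF gne] by simp
    hence "[Suc (degree ?g - 1)] \<cdot> \<one> = \<zero>" using d0[of "degree ?g - 1"] by simp
    thus False using 1 by blast
  next
    case 2
    then obtain p :: nat where "Factorial_Ring.prime p" "[p] \<cdot> \<one> = \<zero>" "\<forall>x\<in>K. \<exists>y\<in>K. y [^] p = x" by blast
    thus False using charp_contra[OF K _ _ _ x alg d0] by blast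
  qed
qed

end


context field
begin


lemma compositum:
  assumes cl: "algebraic_closure R K" and perf: "perfect_subfield K"
    and g1: "galois_over K F1" and g2: "galois_over K F2"
    and fd1: "finite_dimension K F1" and fd2: "finite_dimension K F2"
    and M: "subfield M R" and F1M: "F1 \<subseteq> M" and F2M: "F2 \<subseteq> M"
  shows "\<exists>G. galois_over K G \<and> F1 \<subseteq> G \<and> F2 \<subseteq> G \<and> G \<subseteq> M"
proof -
  interpret AC: algebraic_closure R K using cl .
  have K: "subfield K R" using AC.subfield_axioms .
  have Kc: "K \<subseteq> carrier R" using subfieldE(3)[OF K] .
  have F1: "subfield F1 R" "K \<subseteq> F1" and n1: "\<And>x y. x \<in> F1 \<Longrightarrow> y \<in> carrier R \<Longrightarrow> eval (Irr K x) y = \<zero> \<Longrightarrow> y \<in> F1"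
    using g1 unfolding galois_over_def by auto
  have F2: "subfield F2 R" "K \<subseteq> F2" and n2: "\<And>x y. x \<in> F2 \<Longrightarrow> y \<in> carrier R \<Longrightarrow> eval (Irr K x) y = \<zero> \<Longrightarrow> y \<in> F2"
    using g2 unfolding galois_over_def by auto
  obtain us where us: "set us \<subseteq> carrier R" "Span K us = F1"
    using exists_base[OF K finite_dimensionE[OF K fd1]] by blast
  obtain vs where vs: "set vs \<subseteq> carrier R" "Span K vs = F2"
    using exists_base[OF K finite_dimensionE[OF K fd2]] by blast
  have us1: "set us \<subseteq> F1" using Span_base_incl[OF K us(1)] us(2) by simp
  have vs2: "set vs \<subseteq> F2" using Span_base_incl[OF K vs(1)] vs(2) by simp
  define ws where "ws = us @ vs"
  have wsc: "set ws \<subseteq> carrier R" using us vs unfolding ws_def by auto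
  define G where "G = finite_extension K ws"
  have alg: "(algebraic over K) z" if "z \<in> carrier R" for z using AC.algebraic_extension[OF that] .
  have G: "subfield G R" unfolding G_def using finite_extension_is_subfield[OF K wsc] alg wsc by auto
  have KG: "K \<subseteq> G" unfolding G_def using finite_extension_incl[OF Kc wsc] .
  have wsG: "set ws \<subseteq> G" unfolding G_def using finite_extension_mem[OF subfieldE(1)[OF K] wsc] .
  have F1G: "F1 \<subseteq> G"
    using subalgebra_Span_incl[OF K subring_subalgebra[OF subfieldE(1)[OF G] KG]] wsG us(2)
    unfolding ws_def by auto
  have F2G: "F2 \<subseteq> G"
    using subalgebra_Span_incl[OF K subring_subalgebra[OF subfieldE(1)[OF G] KG]] wsG vs(2)
    unfolding ws_def by auto
  have KM: "K \<subseteq> M" using F1(2) F1M by auto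
  have "set ws \<subseteq> M" using us1 vs2 F1M F2M unfolding ws_def by auto
  hence GM: "G \<subseteq> M" unfolding G_def
    using finite_extension_subring_incl[OF subfieldE(1)[OF M] KM] by blast
  have Gc: "G \<subseteq> carrier R" using subfieldE(3)[OF G] .
  have normal: "y \<in> G" if x: "x \<in> G" and y: "y \<in> carrier R" and ev: "eval (Irr K x) y = \<zero>" for x y
  proof -
    have xc: "x \<in> carrier R" using x Gc by auto
    obtain t0 where t0: "t0 \<in> ring_hom (R\<lparr>carrier := simple_extension K x\<rparr>) R"
        "\<forall>k\<in>K. t0 k = k" "t0 x = y"
      using ext_simple[OF K id_hom_sub[OF subfieldE(1)[OF K]] xc alg[OF xc] y] ev by auto
    define E1 where "E1 = simple_extension K x"
    have E1: "subfield E1 R" unfolding E1_def using simple_extension_is_subfield[OF K xc] alg[OF xc] by auto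
    have KE1: "K \<subseteq> E1" unfolding E1_def using simple_extension_incl[OF Kc xc] .
    have xE1: "x \<in> E1" unfolding E1_def using simple_extension_mem[OF subfieldE(1)[OF K] xc] .
    obtain ht where ht: "ht \<in> ring_hom (R\<lparr>carrier := finite_extension E1 ws\<rparr>) R" "\<forall>z\<in>E1. ht z = t0 z"
      using ext_list[OF cl E1 KE1 _ wsc] t0(1) unfolding E1_def by blast
    define D where "D = finite_extension E1 ws"
    have D: "subring D R" unfolding D_def using finite_extension_is_subring[OF subfieldE(1)[OF E1] wsc] .
    have GD: "G \<subseteq> D" unfolding G_def D_def using mono_finite_extension[OF KE1] .
    have E1D: "E1 \<subseteq> D" unfolding D_def using finite_extension_incl[OF subfieldE(3)[OF E1] wsc] .
    interpret H: ring_hom_ring "R\<lparr>carrier := D\<rparr>" R ht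
      using ring_hom_ringI2[OF subring_is_ring[OF D] ring_axioms ht(1)[folded D_def]] .
    have htK: "ht k = k" if "k \<in> K" for k using that ht(2) t0(2) KE1 by auto
    have hx: "ht x = y" using ht(2) xE1 t0(3) by auto
    have conj: "ht u \<in> F" if F: "subfield F R" "K \<subseteq> F" "F \<subseteq> G"
      and nF: "\<And>x y. x \<in> F \<Longrightarrow> y \<in> carrier R \<Longrightarrow> eval (Irr K x) y = \<zero> \<Longrightarrow> y \<in> F"
      and u: "u \<in> F" for F u
    proof -
      have uD: "u \<in> D" using u F(3) GD by auto
      have uc: "u \<in> carrier R" using u subfieldE(3)[OF F(1)] by auto
      have Iu: "Irr K u \<in> carrier (K[X])" "eval (Irr K u) u = \<zero>" using IrrE[OF K uc alg[OF uc]] by auto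
      have setI: "set (Irr K u) \<subseteq> K" using Iu(1) polynomial_incl unfolding sym[OF univ_poly_carrier] by auto
      have mI: "map ht (Irr K u) = Irr K u" using setI htK by (intro map_idI) auto
      have setD: "set (Irr K u) \<subseteq> D" using setI KG GD by auto
      have "ht (eval (Irr K u) u) = eval (map ht (Irr K u)) (ht u)"
        using H.eval_hom'[of u "Irr K u"] uD setD eval_consistent[OF D] by simp
      hence "eval (Irr K u) (ht u) = \<zero>" using Iu(2) mI H.hom_zero by simp
      moreover have "ht u \<in> carrier R" using H.hom_closed uD by simp
      ultimately show ?thesis using nF[OF u] by blast
    qed
    define S where "S = {z \<in> G. ht z \<in> G}"
    have S: "subring S R"
    proof (rule subringI)
      show "S \<subseteq> carrier R" unfolding S_def using Gc by auto
      show "\<one> \<in> S" unfolding S_def using H.hom_one subringE(3)[OF subfieldE(1)[OF G]] by simp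
    next
      fix a assume "a \<in> S"
      hence a: "a \<in> G" "ht a \<in> G" unfolding S_def by auto
      have "ht (\<ominus> a) = \<ominus> ht a" using hom_neg[OF ht(1)[folded D_def] D] a GD by auto
      thus "\<ominus> a \<in> S" unfolding S_def using a subringE(5)[OF subfieldE(1)[OF G]] by auto
    next
      fix a b assume "a \<in> S" "b \<in> S"
      hence a: "a \<in> G" "ht a \<in> G" and b: "b \<in> G" "ht b \<in> G" unfolding S_def by auto
      have "ht (a \<otimes> b) = ht a \<otimes> ht b" using H.hom_mult[of a b] a b GD by auto
      thus "a \<otimes> b \<in> S" unfolding S_def using a b subringE(6)[OF subfieldE(1)[OF G]] by auto
      have "ht (a \<oplus> b) = ht a \<oplus> ht b" using H.hom_add[of a b] a b GD by auto
      thus "a \<oplus> b \<in> S" unfolding S_def using a b subringE(7)[OF subfieldE(1)[OF G]] by auto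
    qed
    have KS: "K \<subseteq> S" unfolding S_def using KG htK by auto
    have "set ws \<subseteq> S"
    proof
      fix w assume "w \<in> set ws"
      hence "w \<in> F1 \<or> w \<in> F2" using us1 vs2 unfolding ws_def by auto
      thus "w \<in> S"
      proof
        assume w: "w \<in> F1"
        have "ht w \<in> F1" using conj[OF F1 F1G n1 w] .
        thus ?thesis unfolding S_def using w F1G by auto
      next
        assume w: "w \<in> F2"
        have "ht w \<in> F2" using conj[OF F2 F2G n2 w] .
        thus ?thesis unfolding S_def using w F2G by auto
      qed
    qed
    hence "G \<subseteq> S" unfolding G_def using finite_extension_subring_incl[OF S KS] by blast
    thus ?thesis using x hx unfolding S_def by auto
  qed
  have "galois_over K G"
    unfolding galois_over_def
  proof (intro conjI ballI impI)
    show "subfield G R" by fact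
    show "K \<subseteq> G" by fact
  next
    fix x y assume "x \<in> G" "y \<in> carrier R" "eval (Irr K x) y = \<zero>"
    thus "y \<in> G" using normal by blast
  next
    fix x y assume "x \<in> G" "y \<in> carrier R"
    thus "alg_mult (Irr K x) y \<le> 1" using sep_lemma[OF K perf _ alg] Gc by auto
  qed
  thus ?thesis using F1G F2G GM by blast
qed

end


context field
begin



lemma Irr_of_mem:
  assumes K: "subfield K R" and x: "x \<in> K"
  shows "Irr K x = [\<one>, \<ominus> x]"
proof -
  have xc: "x \<in> carrier R" using x subfieldE(3)[OF K] by auto
  have alg: "(algebraic over K) x" using algebraic_self[OF subfieldE(1)[OF K] x] .
  have p: "[\<one>, \<ominus> x] \<in> carrier (K[X])"
    using x subfieldE(1,6)[OF K] subringE(3,5)[OF subfieldE(1)[OF K]]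
    unfolding sym[OF univ_poly_carrier] polynomial_def by auto
  have "pirreducible K [\<one>, \<ominus> x]" using degree_one_imp_pirreducible[OF K p] by simp
  moreover have "eval [\<one>, \<ominus> x] x = \<zero>" using xc by (simp, algebra)
  ultimately show ?thesis
    using minimal_polynomial_is_unique[OF K xc alg] IrrE[OF K xc alg] p by auto
qed

lemma base_galois:
  assumes K: "subfield K R" and perf: "perfect_subfield K"
  shows "galois_over K K"
  unfolding galois_over_def
proof (intro conjI ballI impI)
  show "subfield K R" by fact
  show "K \<subseteq> K" by simp
next
  fix x y assume x: "x \<in> K" and y: "y \<in> carrier R" and ev: "eval (Irr K x) y = \<zero>"
  have xc: "x \<in> carrier R" using x subfieldE(3)[OF K] by auto
  have "y \<oplus> \<ominus> x = \<zero>" using ev unfolding Irr_of_mem[OF K x] using y xc by simp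
  hence "y = x" using y xc by (metis a_minus_def r_neg1 minus_equality add.inv_closed add.m_comm minus_minus)
  thus "y \<in> K" using x by simp
next
  fix x y assume x: "x \<in> K" and y: "y \<in> carrier R"
  show "alg_mult (Irr K x) y \<le> 1"
    using sep_lemma[OF K perf _ algebraic_self[OF subfieldE(1)[OF K] x]] x subfieldE(3)[OF K] by auto
qed

lemma galois_fd:
  assumes K: "subfield K R" and P: "subfield P R" and KP: "K \<subseteq> P" and fd: "finite_dimension K P"
    and g: "galois_over K F" and FP: "F \<subseteq> P"
  shows "finite_dimension K F" "dim K F \<le> dim K P"
proof -
  have F: "subfield F R" "K \<subseteq> F" using g unfolding galois_over_def by auto
  note t = dim_tower[OF K F(1) subfieldE(1)[OF P] F(2) FP fd]
  show "finite_dimension K F" using t(1) .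
  have "dim F P > 0"
  proof (rule ccontr)
    assume "\<not> dim F P > 0"
    hence "dimension 0 F P" using finite_dimensionE[OF F(1) t(2)] unfolding over_def by simp
    hence "P = {\<zero>}" using dimension_zero[OF F(1)] by simp
    moreover have "\<one> \<in> P" "\<one> \<noteq> \<zero>" using subfieldE(1)[OF P] subringE(3) by auto
    ultimately show False by auto
  qed
  thus "dim K F \<le> dim K P" using t(3) by simp
qed

lemma ascending_index_attained:
  assumes K: "subfield K R" and perf: "perfect_subfield K"
    and P: "subfield P R" and KP: "K \<subseteq> P" and fd: "finite_dimension K P"
  shows "\<exists>F. F \<subseteq> P \<and> galois_over K F \<and> dim K F = ascending_index K P"
    and "\<And>F. F \<subseteq> P \<Longrightarrow> galois_over K F \<Longrightarrow> dim K F \<le> ascending_index K P"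
proof -
  let ?S = "{dim K F | F. F \<subseteq> P \<and> galois_over K F}"
  have fin: "finite ?S"
    by (rule finite_subset[of _ "{..dim K P}"]) (auto dest: galois_fd[OF K P KP fd])
  have ne: "dim K K \<in> ?S" using base_galois[OF K perf] KP by auto
  show "\<exists>F. F \<subseteq> P \<and> galois_over K F \<and> dim K F = ascending_index K P"
    using Max_in[OF fin] ne unfolding ascending_index_def by force
  show "\<And>F. F \<subseteq> P \<Longrightarrow> galois_over K F \<Longrightarrow> dim K F \<le> ascending_index K P"
    using Max_ge[OF fin] unfolding ascending_index_def by blast
qed

lemma main:
  assumes cl: "algebraic_closure R K" and perf: "perfect_subfield K"
    and L: "subfield L R" and M: "subfield M R" and KL: "K \<subseteq> L" and LM: "L \<subseteq> M"
    and fdL: "finite_dimension K L" and fdM: "finite_dimension K M"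
  shows "ascending_index K L dvd ascending_index K M"
proof -
  have K: "subfield K R" using cl unfolding algebraic_closure_def by auto
  obtain FL where FL: "FL \<subseteq> L" "galois_over K FL" "dim K FL = ascending_index K L"
    using ascending_index_attained(1)[OF K perf L KL fdL] by blast
  obtain FM where FM: "FM \<subseteq> M" "galois_over K FM" "dim K FM = ascending_index K M"
    using ascending_index_attained(1)[OF K perf M _ fdM] KL LM by blast
  have fdFL: "finite_dimension K FL" using galois_fd(1)[OF K L KL fdL FL(2,1)] .
  have fdFM: "finite_dimension K FM" using galois_fd(1)[OF K M _ fdM FM(2,1)] KL LM by auto
  obtain G where G: "galois_over K G" "FL \<subseteq> G" "FM \<subseteq> G" "G \<subseteq> M"
    using compositum[OF cl perf FL(2) FM(2) fdFL fdFM M] FL(1) LM FM(1) by blast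
  have Gs: "subfield G R" "K \<subseteq> G" using G(1) unfolding galois_over_def by auto
  have FMs: "subfield FM R" "K \<subseteq> FM" using FM(2) unfolding galois_over_def by auto
  have FLs: "subfield FL R" "K \<subseteq> FL" using FL(2) unfolding galois_over_def by auto
  have fdG: "finite_dimension K G" using galois_fd(1)[OF K M _ fdM G(1,4)] KL LM by auto
  have "dim K G \<le> dim K FM"
    using ascending_index_attained(2)[OF K perf M _ fdM G(4,1)] FM(3) KL LM by auto
  moreover have "dim K FM \<le> dim K G"
    using galois_fd(2)[OF K Gs(1) Gs(2) fdG FM(2) G(3)] .
  ultimately have "FM = G"
    using dim_eq_imp_eq[OF K FMs(1) Gs(1) FMs(2) G(3) fdG] by simp
  hence "FL \<subseteq> FM" using G(2) by simp
  hence "dim K FM = dim K FL * dim FL FM"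
    using dim_tower(3)[OF K FLs(1) subfieldE(1)[OF FMs(1)] FLs(2) _ fdFM] by simp
  thus ?thesis using FL(3) FM(3) by simp
qed

end

theorem proposition9p1:
  fixes R :: "('a, 'b) ring_scheme" and K L M :: "'a set"
  assumes "algebraic_closure R K"
    and "ring.perfect_subfield R K"
    and "subfield L R" and "subfield M R"
    and "K \<subseteq> L" and "L \<subseteq> M"
    and "ring.finite_dimension R K L" and "ring.finite_dimension R K M"
  shows "ring.ascending_index R K L dvd ring.ascending_index R K M"
proof -
  interpret field R using assms(1) unfolding algebraic_closure_def by auto
  show ?thesis using main assms by blast
qed


end
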